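(* For a parking graph $P$ on $[n]$, let $\psi(P)\subseteq\mathbb{R}^n$ be the set of all $\mathbf{x}$ satisfying: $x_j-x_k\ge 1$ for every down edge $j\leftarrow k$ of $P$; $0\le x_j-x_k\le 1$ for every downish edge $jk$ of $P$ ($j<k$); and $x_j-x_k\le 0$ for every up edge $j\rightarrow k$ of $P$. Then for every parking graph $P$ the set $\psi(P)$ has nonempty interior and its interior is a region of the $n$-dimensional Shi arrangement; and the map sending $P$ to the interior of $\psi(P)$ is a bijection between the set of parking graphs on $[n]$ and the set of regions of the $n$-dimensional Shi arrangement.
   Context: The $n$-dimensional Shi arrangement is the set of hyperplanes in $\mathbb{R}^n$ given by $x_j-x_k=0$ and $x_j-x_k=1$ for all $1\le j<k\le n$. A region of it is a connected component of the complement in $\mathbb{R}^n$ of the union of these hyperplanes. A mixed graph may contain both undirected and directed edges. A parking graph $P$ on $[n]$ is a mixed graph with vertex set $[n]$ in which every pair $\{j,k\}$ with $1\le j<k\le n$ is joined by exactly one edge, which is of exactly one of three types: a down edge $j\leftarrow k$ (directed from $k$ to $j$), an up edge $j\rightarrow k$ (directed from $j$ to $k$), or a downish edge $jk$ (undirected). Let $\vec P$ be the directed graph obtained from $P$ by keeping all directed edges and replacing every downish edge $jk$ ($j<k$) by the directed edge $j\leftarrow k$. $P$ must satisfy the source-sink condition: (i) $\vec P$ is acyclic, and (ii) for every triangle of $P$ among whose three edges there is at least one down edge and at least one downish edge, the source (vertex of in-degree $0$ within the triangle in $\vec P$) and the sink (vertex of out-degree $0$ within the triangle in $\vec P$) are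 not joined by a downish edge in $P$. *)

theory Defs
  imports "HOL-Analysis.Analysis"
begin

text \<open>The vertex set [n] is modelled by a finite linearly ordered type 'n
  (every finite linear order of size n is order-isomorphic to [n]);
  R^n is real ^ 'n.\<close>

datatype edge_kind = DownE | UpE | DownishE

text \<open>A mixed graph with exactly one edge between each pair j < k is encoded by
  P :: 'n => 'n => edge_kind, where P j k (j < k) is the kind of the edge jk:
  DownE means j <- k, UpE means j -> k, DownishE means undirected jk.
  Values P j k with not (j < k) are irrelevant and normalised to DownE.\<close>

definition normalised_mg :: "('n::linorder \<Rightarrow> 'n \<Rightarrow> edge_kind) \<Rightarrow> bool" where
  "normalised_mg P \<longleftrightarrow> (\<forall>j k. \<not> j < k \<longrightarrow> P j k = DownE)"

definition ekind :: "('n::linorder \<Rightarrow> 'n \<Rightarrow> edge_kind) \<Rightarrow> 'n \<Rightarrow> 'n \<Rightarrow> edge_kind" where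
  "ekind P u v = (if u < v then P u v else P v u)"

text \<open>Arcs of the directed graph vec P: arc u v means an arc from u to v.
  Down edge j <- k and downish edge jk (j<k) give arc k -> j; up edge j -> k gives j -> k.\<close>
definition arc :: "('n::linorder \<Rightarrow> 'n \<Rightarrow> edge_kind) \<Rightarrow> 'n \<Rightarrow> 'n \<Rightarrow> bool" where
  "arc P u v \<longleftrightarrow> (u < v \<and> P u v = UpE) \<or> (v < u \<and> P v u \<noteq> UpE)"

definition source_sink_condition :: "('n::linorder \<Rightarrow> 'n \<Rightarrow> edge_kind) \<Rightarrow> bool" where
  "source_sink_condition P \<longleftrightarrow>
     acyclic {(u, v). arc P u v} \<and>
     (\<forall>a b c. a \<noteq> b \<and> b \<noteq> c \<and> a \<noteq> c \<and>
        (\<exists>u\<in>{a,b,c}. \<exists>v\<in>{a,b,c}. u \<noteq> v \<and> ekind P u v = DownE) \<and>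
        (\<exists>u\<in>{a,b,c}. \<exists>v\<in>{a,b,c}. u \<noteq> v \<and> ekind P u v = DownishE) \<longrightarrow>
        (\<forall>s\<in>{a,b,c}. \<forall>t\<in>{a,b,c}.
           s \<noteq> t \<and> (\<forall>u\<in>{a,b,c}. \<not> arc P u s) \<and> (\<forall>u\<in>{a,b,c}. \<not> arc P t u)
           \<longrightarrow> ekind P s t \<noteq> DownishE))"

definition parking_graph :: "('n::linorder \<Rightarrow> 'n \<Rightarrow> edge_kind) \<Rightarrow> bool" where
  "parking_graph P \<longleftrightarrow> normalised_mg P \<and> source_sink_condition P"

definition psi :: "('n::{finite,linorder} \<Rightarrow> 'n \<Rightarrow> edge_kind) \<Rightarrow> (real ^ 'n::{finite,linorder}) set" where
  "psi P = {x. \<forall>j k. j < k \<longrightarrow>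
      (P j k = DownE \<longrightarrow> x $ j - x $ k \<ge> 1) \<and>
      (P j k = DownishE \<longrightarrow> 0 \<le> x $ j - x $ k \<and> x $ j - x $ k \<le> 1) \<and>
      (P j k = UpE \<longrightarrow> x $ j - x $ k \<le> 0)}"

definition shi_union :: "(real ^ 'n::{finite,linorder}) set" where
  "shi_union = {x. \<exists>j k. j < k \<and> (x $ j - x $ k = 0 \<or> x $ j - x $ k = 1)}"

definition shi_regions :: "(real ^ 'n::{finite,linorder}) set set" where
  "shi_regions = {connected_component_set (- shi_union) x | x. x \<notin> shi_union}"

end

theory Submission
  imports Defs
begin


definition cell :: "('n::{finite,linorder} \<Rightarrow> 'n \<Rightarrow> edge_kind) \<Rightarrow> (real ^ 'n::{finite,linorder}) set" where
  "cell P = {x. \<forall>j k. j < k \<longrightarrow>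
      (P j k = DownE \<longrightarrow> x $ j - x $ k > 1) \<and>
      (P j k = DownishE \<longrightarrow> 0 < x $ j - x $ k \<and> x $ j - x $ k < 1) \<and>
      (P j k = UpE \<longrightarrow> x $ j - x $ k < 0)}"

definition pat :: "real ^ 'n::{finite,linorder} \<Rightarrow> 'n \<Rightarrow> 'n \<Rightarrow> edge_kind" where
  "pat x j k = (if j < k then (if 1 < x $ j - x $ k then DownE
      else if 0 < x $ j - x $ k then DownishE else UpE) else DownE)"

lemma cont_diff: "continuous_on UNIV (\<lambda>x::real^'n. x $ j - x $ k)"
  by (intro continuous_intros linear_continuous_on bounded_linear_vec_nth)

lemma open_gt: "open {x::real^'n. c < x $ j - x $ k}"
  by (rule open_Collect_less) (auto intro: cont_diff continuous_on_const)

lemma open_lt: "open {x::real^'n. x $ j - x $ k < c}"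
  by (rule open_Collect_less) (auto intro: cont_diff continuous_on_const)

lemma open_cell: "open (cell P)"
proof -
  have "cell P = (\<Inter>j. \<Inter>k. {x. j < k \<longrightarrow>
      (P j k = DownE \<longrightarrow> x $ j - x $ k > 1) \<and>
      (P j k = DownishE \<longrightarrow> 0 < x $ j - x $ k \<and> x $ j - x $ k < 1) \<and>
      (P j k = UpE \<longrightarrow> x $ j - x $ k < 0)})"
    unfolding cell_def by auto
  also have "open \<dots>"
  proof (intro open_INT ballI finite_UNIV)
    fix j k
    show "open {x::real^_. j < k \<longrightarrow>
      (P j k = DownE \<longrightarrow> x $ j - x $ k > 1) \<and>
      (P j k = DownishE \<longrightarrow> 0 < x $ j - x $ k \<and> x $ j - x $ k < 1) \<and>
      (P j k = UpE \<longrightarrow> x $ j - x $ k < 0)}"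
      by (intro open_Collect_imp open_Collect_conj closed_Collect_const) (rule open_gt open_lt)+
  qed simp_all
  finally show ?thesis .
qed

lemma cell_sub_psi: "cell P \<subseteq> psi P"
  unfolding cell_def psi_def by force

lemma norm_axis_real: "norm (axis j (s::real)) = \<bar>s\<bar>"
proof -
  have "axis j s = s *\<^sub>R axis j 1" by (simp add: axis_def vec_eq_iff)
  then show ?thesis by simp
qed

lemma interior_psi: "interior (psi P) = cell P"
proof
  show "cell P \<subseteq> interior (psi P)"
    by (rule interior_maximal[OF cell_sub_psi open_cell])
next
  show "interior (psi P) \<subseteq> cell P"
  proof
    fix x assume "x \<in> interior (psi P)"
    then obtain e where e: "e > 0" "ball x e \<subseteq> psi P" by (meson mem_interior)
    have key: "\<And>s. \<bar>s\<bar> < e \<Longrightarrow> x + axis j s \<in> psi P" for j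
    proof -
      fix s :: real assume "\<bar>s\<bar> < e"
      then have "x + axis j s \<in> ball x e"
        by (simp add: dist_norm norm_axis_real)
      then show "x + axis j s \<in> psi P" using e by blast
    qed
    show "x \<in> cell P"
      unfolding cell_def
    proof (intro CollectI allI impI)
      fix j k :: 'a assume jk: "j < k"
      then have jnk: "j \<noteq> k" by simp
      have A: "\<And>s. \<bar>s\<bar> < e \<Longrightarrow>
          (P j k = DownE \<longrightarrow> x $ j - x $ k + s \<ge> 1) \<and>
          (P j k = DownishE \<longrightarrow> 0 \<le> x $ j - x $ k + s \<and> x $ j - x $ k + s \<le> 1) \<and>
          (P j k = UpE \<longrightarrow> x $ j - x $ k + s \<le> 0)"
      proof -
        fix s :: real assume "\<bar>s\<bar> < e"
        have "x + axis j s \<in> psi P" using key[OF \<open>\<bar>s\<bar> < e\<close>] .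
        then have "\<forall>j' k'. j' < k' \<longrightarrow>
      (P j' k' = DownE \<longrightarrow> (x + axis j s) $ j' - (x + axis j s) $ k' \<ge> 1) \<and>
      (P j' k' = DownishE \<longrightarrow> 0 \<le> (x + axis j s) $ j' - (x + axis j s) $ k' \<and> (x + axis j s) $ j' - (x + axis j s) $ k' \<le> 1) \<and>
      (P j' k' = UpE \<longrightarrow> (x + axis j s) $ j' - (x + axis j s) $ k' \<le> 0)"
          unfolding psi_def by simp
        then have "(P j k = DownE \<longrightarrow> (x + axis j s) $ j - (x + axis j s) $ k \<ge> 1) \<and>
      (P j k = DownishE \<longrightarrow> 0 \<le> (x + axis j s) $ j - (x + axis j s) $ k \<and> (x + axis j s) $ j - (x + axis j s) $ k \<le> 1) \<and>
      (P j k = UpE \<longrightarrow> (x + axis j s) $ j - (x + axis j s) $ k \<le> 0)"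
          using jk by blast
        moreover have "(x + axis j s) $ j - (x + axis j s) $ k = x $ j - x $ k + s"
          using jnk by (simp add: axis_def)
        ultimately show "?thesis s" by argo
      qed
      show "(P j k = DownE \<longrightarrow> x $ j - x $ k > 1) \<and>
      (P j k = DownishE \<longrightarrow> 0 < x $ j - x $ k \<and> x $ j - x $ k < 1) \<and>
      (P j k = UpE \<longrightarrow> x $ j - x $ k < 0)"
      proof -
        have "\<bar>e/2\<bar> < e" "\<bar>-e/2\<bar> < e" using e(1) by auto
        from A[OF this(1)] A[OF this(2)] e(1) show ?thesis by argo
      qed
    qed
  qed
qed

lemma shi_union_iff: "z \<in> shi_union \<longleftrightarrow> (\<exists>j k. j < k \<and> (z $ j - z $ k = 0 \<or> z $ j - z $ k = 1))"
  unfolding shi_union_def by simp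

lemma cell_not_shi: "x \<in> cell P \<Longrightarrow> x \<notin> shi_union"
proof
  assume x: "x \<in> cell P" and "x \<in> shi_union"
  then obtain j k where jk: "j < k" and d: "x $ j - x $ k = 0 \<or> x $ j - x $ k = 1"
    unfolding shi_union_iff by blast
  have "(P j k = DownE \<longrightarrow> x $ j - x $ k > 1) \<and>
      (P j k = DownishE \<longrightarrow> 0 < x $ j - x $ k \<and> x $ j - x $ k < 1) \<and>
      (P j k = UpE \<longrightarrow> x $ j - x $ k < 0)" using x jk unfolding cell_def by blast
  with d show False by (cases "P j k") auto
qed

lemma pat_cell: fixes x :: "real^'n::{finite,linorder}" assumes "x \<notin> shi_union" shows "x \<in> cell (pat x)"
  unfolding cell_def
proof (intro CollectI allI impI)
  fix j k :: 'n assume jk: "j < k"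
  with assms have "x $ j - x $ k \<noteq> 0" "x $ j - x $ k \<noteq> 1" unfolding shi_union_iff by blast+
  then show "(pat x j k = DownE \<longrightarrow> x $ j - x $ k > 1) \<and>
      (pat x j k = DownishE \<longrightarrow> 0 < x $ j - x $ k \<and> x $ j - x $ k < 1) \<and>
      (pat x j k = UpE \<longrightarrow> x $ j - x $ k < 0)" using jk unfolding pat_def by auto
qed

lemma cell_pat: "normalised_mg P \<Longrightarrow> x \<in> cell P \<Longrightarrow> P = pat x"
proof (intro ext)
  fix j k assume n: "normalised_mg P" and x: "x \<in> cell P"
  show "P j k = pat x j k"
  proof (cases "j < k")
    case True
    with x show ?thesis unfolding cell_def pat_def
      by (cases "P j k") force+
  next
    case False
    with n show ?thesis unfolding normalised_mg_def pat_def by simp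
  qed
qed

lemma conv_lt: "(u::real) \<ge> 0 \<Longrightarrow> v \<ge> 0 \<Longrightarrow> u + v = 1 \<Longrightarrow> a < c \<Longrightarrow> b < c \<Longrightarrow> u * a + v * b < c"
proof -
  assume h: "u \<ge> 0" "v \<ge> 0" "u + v = 1" "a < c" "b < c"
  have "u * a \<le> u * c" using h by (simp add: mult_left_mono)
  moreover have "v * b \<le> v * c" using h by (simp add: mult_left_mono)
  moreover have "u * a < u * c \<or> v * b < v * c" using h
  proof (cases "u = 0")
    case True then have "v = 1" using h by simp
    then show ?thesis using h by simp
  next
    case False then have "u > 0" using h by simp
    then show ?thesis using h by simp
  qed
  ultimately have "u * a + v * b < u * c + v * c" by linarith
  also have "\<dots> = (u + v) * c" by (simp add: distrib_right)
  also have "\<dots> = c" using h by simp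
  finally show ?thesis .
qed

lemma conv_gt: "(u::real) \<ge> 0 \<Longrightarrow> v \<ge> 0 \<Longrightarrow> u + v = 1 \<Longrightarrow> c < a \<Longrightarrow> c < b \<Longrightarrow> c < u * a + v * b"
  using conv_lt[of u v "-a" "-c" "-b"] by simp

lemma convex_cell: fixes P :: "'n::{finite,linorder} \<Rightarrow> 'n \<Rightarrow> edge_kind" shows "convex (cell P)"
  unfolding convex_def
proof (intro ballI allI impI)
  fix x y :: "real^'n::{finite,linorder}" and u v :: real
  assume x: "x \<in> cell P" and y: "y \<in> cell P" and uv: "0 \<le> u" "0 \<le> v" "u + v = 1"
  show "u *\<^sub>R x + v *\<^sub>R y \<in> cell P"
    unfolding cell_def
  proof (intro CollectI allI impI)
    fix j k :: 'n assume jk: "j < k"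
    define z where "z = u *\<^sub>R x + v *\<^sub>R y"
    have e: "z $ j - z $ k
        = u * (x $ j - x $ k) + v * (y $ j - y $ k)" unfolding z_def by (simp add: algebra_simps)
    have cx: "(P j k = DownE \<longrightarrow> x $ j - x $ k > 1) \<and>
      (P j k = DownishE \<longrightarrow> 0 < x $ j - x $ k \<and> x $ j - x $ k < 1) \<and>
      (P j k = UpE \<longrightarrow> x $ j - x $ k < 0)" using x jk unfolding cell_def by blast
    have cy: "(P j k = DownE \<longrightarrow> y $ j - y $ k > 1) \<and>
      (P j k = DownishE \<longrightarrow> 0 < y $ j - y $ k \<and> y $ j - y $ k < 1) \<and>
      (P j k = UpE \<longrightarrow> y $ j - y $ k < 0)" using y jk unfolding cell_def by blast
    show "(P j k = DownE \<longrightarrow> (u *\<^sub>R x + v *\<^sub>R y) $ j - (u *\<^sub>R x + v *\<^sub>R y) $ k > 1) \<and>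
      (P j k = DownishE \<longrightarrow> 0 < (u *\<^sub>R x + v *\<^sub>R y) $ j - (u *\<^sub>R x + v *\<^sub>R y) $ k \<and> (u *\<^sub>R x + v *\<^sub>R y) $ j - (u *\<^sub>R x + v *\<^sub>R y) $ k < 1) \<and>
      (P j k = UpE \<longrightarrow> (u *\<^sub>R x + v *\<^sub>R y) $ j - (u *\<^sub>R x + v *\<^sub>R y) $ k < 0)"
    proof (cases "P j k")
      case DownE then show ?thesis using cx cy conv_gt[OF uv, of 1 "x $ j - x $ k" "y $ j - y $ k"] by (simp add: algebra_simps)
    next
      case DownishE then show ?thesis using cx cy conv_gt[OF uv, of 0 "x $ j - x $ k" "y $ j - y $ k"] conv_lt[OF uv, of "x $ j - x $ k" 1 "y $ j - y $ k"] by (simp add: algebra_simps)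
    next
      case UpE then show ?thesis using cx cy conv_lt[OF uv, of "x $ j - x $ k" 0 "y $ j - y $ k"] by (simp add: algebra_simps)
    qed
  qed
qed

lemma side:
  fixes C :: "(real^'n::{finite,linorder}) set"
  assumes C: "connected C" "C \<subseteq> - shi_union" and x: "x \<in> C" and y: "y \<in> C"
    and jk: "j < k" and c: "c = 0 \<or> c = 1"
  shows "x $ j - x $ k < c \<Longrightarrow> y $ j - y $ k < c"
proof (rule ccontr)
  assume a: "x $ j - x $ k < c" "\<not> y $ j - y $ k < c"
  let ?f = "\<lambda>z. z $ j - z $ k"
  have "connected (?f ` C)"
    by (rule connected_continuous_image[OF continuous_on_subset[OF cont_diff] C(1)]) simp
  moreover have "?f x \<in> ?f ` C" "?f y \<in> ?f ` C" using x y by auto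
  ultimately have "c \<in> ?f ` C"
    unfolding connected_iff_interval using a by (meson less_le_not_le nle_le)
  then obtain z where "z \<in> C" "?f z = c" by blast
  then have "z \<in> shi_union" unfolding shi_union_iff using jk c by blast
  then show False using C(2) \<open>z \<in> C\<close> by blast
qed

lemma comp_cell:
  assumes x: "x \<notin> shi_union"
  shows "connected_component_set (- shi_union) x = cell (pat x)"
proof
  show "cell (pat x) \<subseteq> connected_component_set (- shi_union) x"
    by (rule connected_component_maximal)
       (use pat_cell[OF x] convex_connected[OF convex_cell] cell_not_shi in auto)
next
  let ?C = "connected_component_set (- shi_union) x"
  have C: "connected ?C" "?C \<subseteq> - shi_union" "x \<in> ?C"
    using x connected_component_subset connected_connected_component
    by (auto simp: connected_component_refl_eq)
  show "?C \<subseteq> cell (pat x)"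
  proof
    fix y assume y: "y \<in> ?C"
    have yn: "y \<notin> shi_union" using C(2) y by blast
    show "y \<in> cell (pat x)"
      unfolding cell_def
    proof (intro CollectI allI impI)
      fix j k :: 'a assume jk: "j < k"
      have s0: "x $ j - x $ k < 0 \<longleftrightarrow> y $ j - y $ k < 0"
        using side[OF C(1,2) C(3) y jk] side[OF C(1,2) y C(3) jk] by blast
      have s1: "x $ j - x $ k < 1 \<longleftrightarrow> y $ j - y $ k < 1"
        using side[OF C(1,2) C(3) y jk] side[OF C(1,2) y C(3) jk] by blast
      have n: "y $ j - y $ k \<noteq> 0" "y $ j - y $ k \<noteq> 1" "x $ j - x $ k \<noteq> 0" "x $ j - x $ k \<noteq> 1"
        using yn x jk unfolding shi_union_iff by blast+
      show "(pat x j k = DownE \<longrightarrow> y $ j - y $ k > 1) \<and>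
      (pat x j k = DownishE \<longrightarrow> 0 < y $ j - y $ k \<and> y $ j - y $ k < 1) \<and>
      (pat x j k = UpE \<longrightarrow> y $ j - y $ k < 0)"
        using s0 s1 n jk unfolding pat_def by auto
    qed
  qed
qed

lemma pat_normalised: "normalised_mg (pat x)"
  unfolding normalised_mg_def pat_def by simp

lemma arc_pat: "x \<notin> shi_union \<Longrightarrow> arc (pat x) u v \<longleftrightarrow> u \<noteq> v \<and> x $ u < x $ v"
proof -
  assume x: "x \<notin> shi_union"
  show ?thesis
  proof (cases u v rule: linorder_cases)
    case less
    then have "x $ u - x $ v \<noteq> 0" using x unfolding shi_union_iff by blast
    then show ?thesis using less unfolding arc_def pat_def by auto
  next
    case equal then show ?thesis unfolding arc_def by auto
  next
    case greater
    then have "x $ v - x $ u \<noteq> 0" using x unfolding shi_union_iff by blast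
    then show ?thesis using greater unfolding arc_def pat_def by auto
  qed
qed



lemma arc_asym: "arc P u v \<Longrightarrow> \<not> arc P v u"
  unfolding arc_def by auto

lemma arc_irrefl: "\<not> arc P u u"
  unfolding arc_def by auto

lemma arc_total: "u \<noteq> v \<Longrightarrow> arc P u v \<or> arc P v u"
  unfolding arc_def by (cases u v rule: linorder_cases) auto

lemma ekind_sym: "ekind P u v = ekind P v u"
  unfolding ekind_def by (cases u v rule: linorder_cases) auto

lemma arc_less_non_up: "arc P u v \<Longrightarrow> ekind P u v \<noteq> UpE \<Longrightarrow> v < u"
  unfolding arc_def ekind_def by auto

lemma arc_less_up: "arc P u v \<Longrightarrow> ekind P u v = UpE \<Longrightarrow> u < v"
  unfolding arc_def ekind_def by (auto split: if_splits)

lemma arc_trans: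
  assumes ac: "acyclic {(u,v). arc P u v}" and uv: "arc P u v" and vw: "arc P v w"
  shows "arc P u w"
proof (rule ccontr)
  assume n: "\<not> arc P u w"
  have "u \<noteq> w" using uv vw arc_asym by blast
  then have wu: "arc P w u" using n arc_total by blast
  let ?R = "{(u,v). arc P u v}"
  have "(u, v) \<in> ?R" "(v, w) \<in> ?R" "(w, u) \<in> ?R" using uv vw wu by auto
  then have "(u, u) \<in> ?R\<^sup>+"
    by (meson trancl.r_into_trancl trancl_into_trancl)
  then show False using ac unfolding acyclic_def by blast
qed

lemma tri:
  assumes ss: "source_sink_condition P"
    and ab: "arc P a b" and bc: "arc P b c" and ac: "arc P a c"
    and dish: "ekind P a c = DownishE"
    and down: "ekind P a b = DownE \<or> ekind P b c = DownE"
  shows False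
proof -
  have d: "a \<noteq> b" "b \<noteq> c" "a \<noteq> c" using ab bc ac arc_irrefl by auto
  have e1: "\<exists>u\<in>{a,b,c}. \<exists>v\<in>{a,b,c}. u \<noteq> v \<and> ekind P u v = DownE" using down d by blast
  have e2: "\<exists>u\<in>{a,b,c}. \<exists>v\<in>{a,b,c}. u \<noteq> v \<and> ekind P u v = DownishE" using dish d by blast
  have H: "\<forall>s\<in>{a,b,c}. \<forall>t\<in>{a,b,c}.
           s \<noteq> t \<and> (\<forall>u\<in>{a,b,c}. \<not> arc P u s) \<and> (\<forall>u\<in>{a,b,c}. \<not> arc P t u)
           \<longrightarrow> ekind P s t \<noteq> DownishE"
    by (rule mp[OF conjunct2[OF ss[unfolded source_sink_condition_def],
          THEN spec[where x=a], THEN spec[where x=b], THEN spec[where x=c]]])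
       (intro conjI d e1 e2)
  have s: "\<forall>u\<in>{a,b,c}. \<not> arc P u a" using arc_irrefl arc_asym ab ac by blast
  have t: "\<forall>u\<in>{a,b,c}. \<not> arc P c u" using arc_irrefl arc_asym bc ac by blast
  have "ekind P a c \<noteq> DownishE"
    by (rule H[rule_format, of a c]) (use s t d(3) in auto)
  with dish show False by simp
qed

definition Short where
  "Short P u v \<longleftrightarrow> (\<exists>a b. arc P a b \<and> ekind P a b = DownishE \<and> (a = u \<or> arc P a u) \<and> (v = b \<or> arc P v b))"

lemma nesting:
  assumes pg: "parking_graph P" and sh: "Short P c d" and cd: "arc P c d" and dn: "ekind P c d = DownE"
  shows False
proof -
  have ss: "source_sink_condition P" using pg unfolding parking_graph_def by blast
  have acy: "acyclic {(u,v). arc P u v}" using ss unfolding source_sink_condition_def by blast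
  note tr = arc_trans[OF acy]
  obtain a b where ab: "arc P a b" and dab: "ekind P a b = DownishE"
    and ac: "a = c \<or> arc P a c" and db: "d = b \<or> arc P d b"
    using sh unfolding Short_def by blast
  show False
  proof (cases "a = c")
    case True
    show False
    proof (cases "d = b")
      case True
      with \<open>a = c\<close> dab dn show False by simp
    next
      case False
      with db have "arc P d b" by simp
      then show False using tri[OF ss, of a d b] True cd ab dab dn by simp
    qed
  next
    case False
    with ac have acc: "arc P a c" by simp
    show False
    proof (cases "d = b")
      case True
      then show False using tri[OF ss, of a c b] acc cd ab dab dn ekind_sym[of P c b] by simp
    next
      case False
      with db have dbb: "arc P d b" by simp
      have ad: "arc P a d" using tr[OF acc cd] .
      have cb: "arc P c b" using tr[OF cd dbb] .
      have k1: "ekind P a d = UpE"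
      proof (rule ccontr)
        assume "ekind P a d \<noteq> UpE"
        then consider "ekind P a d = DownE" | "ekind P a d = DownishE" by (cases "ekind P a d") auto
        then show False
        proof cases
          case 1 then show False using tri[OF ss, of a d b] ad dbb ab dab by simp
        next
          case 2 then show False using tri[OF ss, of a c d] acc cd ad dn by simp
        qed
      qed
      have k2: "ekind P c b = UpE"
      proof (rule ccontr)
        assume "ekind P c b \<noteq> UpE"
        then consider "ekind P c b = DownE" | "ekind P c b = DownishE" by (cases "ekind P c b") auto
        then show False
        proof cases
          case 1 then show False using tri[OF ss, of a c b] acc cb ab dab by simp
        next
          case 2 then show False using tri[OF ss, of c d b] cd dbb cb dn by simp
        qed
      qed
      have "a < d" using arc_less_up[OF ad k1] .
      moreover have "d < c" using arc_less_non_up[OF cd] dn by simp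
      moreover have "c < b" using arc_less_up[OF cb k2] .
      moreover have "b < a" using arc_less_non_up[OF ab] dab by simp
      ultimately show False by simp
    qed
  qed
qed

lemma short_left:
  assumes acy: "acyclic {(u,v). arc P u v}" and "Short P u v" and "arc P u u'"
  shows "Short P u' v"
proof -
  obtain a b where ab: "arc P a b" "ekind P a b = DownishE" "a = u \<or> arc P a u" "v = b \<or> arc P v b"
    using assms(2) unfolding Short_def by blast
  have "a = u' \<or> arc P a u'" using ab(3) assms(3) arc_trans[OF acy] by blast
  then show ?thesis unfolding Short_def using ab by blast
qed

lemma short_right:
  assumes acy: "acyclic {(u,v). arc P u v}" and "Short P u v" and "arc P v' v"
  shows "Short P u v'"
proof -
  obtain a b where ab: "arc P a b" "ekind P a b = DownishE" "a = u \<or> arc P a u" "v = b \<or> arc P v b"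
    using assms(2) unfolding Short_def by blast
  have "v' = b \<or> arc P v' b" using ab(4) assms(3) arc_trans[OF acy] by blast
  then show ?thesis unfolding Short_def using ab by blast
qed

lemma between:
  fixes L U :: "real set"
  assumes "finite L" "finite U" "\<forall>l\<in>L. \<forall>t\<in>U. l < t"
  shows "\<exists>t. (\<forall>l\<in>L. l < t) \<and> (\<forall>u\<in>U. t < u)"
proof (cases "L = {}")
  case True
  show ?thesis
  proof (cases "U = {}")
    case True with \<open>L = {}\<close> show ?thesis by auto
  next
    case False
    then show ?thesis using \<open>L = {}\<close> assms(2)
      by (intro exI[of _ "Min U - 1"]) (auto dest: Min_le[OF assms(2)])
  qed
next
  case False
  show ?thesis
  proof (cases "U = {}")
    case True with False show ?thesis using assms(1)
      by (intro exI[of _ "Max L + 1"]) (auto dest: Max_ge[OF assms(1)])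
  next
    case U: False
    have "Max L \<in> L" "Min U \<in> U" using False U assms by auto
    then have "Max L < Min U" using assms(3) by blast
    then show ?thesis using assms(1,2)
      by (intro exI[of _ "(Max L + Min U) / 2"])
         (auto dest!: Max_ge[OF assms(1)] Min_le[OF assms(2)])
  qed
qed



definition rk :: "('n::{finite,linorder} \<Rightarrow> 'n \<Rightarrow> edge_kind) \<Rightarrow> 'n \<Rightarrow> nat" where
  "rk P u = card {v. arc P v u}"

lemma rk_mono:
  fixes P :: "'n::{finite,linorder} \<Rightarrow> 'n \<Rightarrow> edge_kind"
  assumes acy: "acyclic {(u,v). arc P u v}" and uv: "arc P u v"
  shows "rk P u < rk P v"
proof -
  have "{w. arc P w u} \<subset> {w. arc P w v}"
    using arc_trans[OF acy _ uv] uv arc_irrefl[of P u] by blast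
  then show ?thesis unfolding rk_def by (simp add: psubset_card_mono)
qed

definition good where
  "good P I (y :: _ \<Rightarrow> real) \<longleftrightarrow> (\<forall>u\<in>I. \<forall>v\<in>I. (arc P u v \<longrightarrow> y u < y v) \<and>
       (arc P u v \<and> Short P u v \<longrightarrow> y v < y u + 1) \<and>
       (arc P u v \<and> ekind P u v = DownE \<longrightarrow> y u + 1 < y v))"

lemma goodA: "good P I y \<Longrightarrow> u \<in> I \<Longrightarrow> v \<in> I \<Longrightarrow> arc P u v \<Longrightarrow> y u < y v"
  unfolding good_def by blast
lemma goodS: "good P I y \<Longrightarrow> u \<in> I \<Longrightarrow> v \<in> I \<Longrightarrow> arc P u v \<Longrightarrow> Short P u v \<Longrightarrow> y v < y u + 1"
  unfolding good_def by blast
lemma goodL: "good P I y \<Longrightarrow> u \<in> I \<Longrightarrow> v \<in> I \<Longrightarrow> arc P u v \<Longrightarrow> ekind P u v = DownE \<Longrightarrow> y u + 1 < y v"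
  unfolding good_def by blast

lemma realize:
  fixes P :: "'n::{finite,linorder} \<Rightarrow> 'n \<Rightarrow> edge_kind"
  assumes pg: "parking_graph P"
  shows "\<exists>y. good P I y"
proof (induction "card I" arbitrary: I rule: less_induct)
  case less
  have ss: "source_sink_condition P" using pg unfolding parking_graph_def by blast
  have acy: "acyclic {(u,v). arc P u v}" using ss unfolding source_sink_condition_def by blast
  note tr = arc_trans[OF acy]
  show ?case
  proof (cases "I = {}")
    case True then show ?thesis unfolding good_def by auto
  next
    case False
    have fin: "finite I" by simp
    define m where "m = Max (rk P ` I)"
    have "m \<in> rk P ` I" unfolding m_def using False fin by simp
    then obtain w where w: "w \<in> I" "rk P w = m" by blast
    have wm: "\<And>u. u \<in> I \<Longrightarrow> rk P u \<le> rk P w" using w fin unfolding m_def by simp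
    have wmax: "arc P u w" if "u \<in> I" "u \<noteq> w" for u
    proof -
      have "\<not> arc P w u" using wm[OF that(1)] rk_mono[OF acy, of w u] by linarith
      then show ?thesis using arc_total[of u w P] that(2) by blast
    qed
    define I' where "I' = I - {w}"
    have "card I' < card I" unfolding I'_def by (rule card_Diff1_less[OF fin w(1)])
    then obtain y where y: "good P I' y" using less by blast
    define A where "A = {u\<in>I'. Short P u w}"
    define D where "D = {u\<in>I'. ekind P u w = DownE}"
    define L where "L = y ` I' \<union> (\<lambda>u. y u + 1) ` D"
    define U where "U = (\<lambda>u. y u + 1) ` A"
    have sep: "\<forall>l\<in>L. \<forall>t\<in>U. l < t"
    proof (intro ballI)
      fix l t assume l: "l \<in> L" and t: "t \<in> U"
      then obtain a where a: "a \<in> I'" "Short P a w" "t = y a + 1" unfolding U_def A_def by blast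
      have aw: "arc P a w" using wmax a(1) unfolding I'_def by blast
      from l consider (i) u where "u \<in> I'" "l = y u" | (ii) d where "d \<in> I'" "ekind P d w = DownE" "l = y d + 1"
        unfolding L_def D_def by blast
      then show "l < t"
      proof cases
        case i
        have uw: "arc P u w" using wmax i(1) unfolding I'_def by blast
        consider "u = a" | "arc P u a" | "arc P a u" using arc_total by blast
        then show ?thesis
        proof cases
          case 1 then show ?thesis using i a by simp
        next
          case 2 then show ?thesis using goodA[OF y i(1) a(1) 2] i a by simp
        next
          case 3
          have "Short P a u" using short_right[OF acy a(2) uw] .
          then show ?thesis using goodS[OF y a(1) i(1) 3] i a by simp
        qed
      next
        case ii
        have dw: "arc P d w" using wmax ii(1) unfolding I'_def by blast
        consider "d = a" | "arc P d a" | "arc P a d" using arc_total by blast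
        then show ?thesis
        proof cases
          case 1 then show ?thesis using nesting[OF pg _ dw ii(2)] a by simp
        next
          case 2 then show ?thesis using goodA[OF y ii(1) a(1) 2] ii a by simp
        next
          case 3
          have "Short P d w" using short_left[OF acy a(2) 3] .
          then show ?thesis using nesting[OF pg _ dw ii(2)] by simp
        qed
      qed
    qed
    have "finite L" "finite U" unfolding L_def U_def by simp_all
    from between[OF this sep] obtain t where t: "\<forall>l\<in>L. l < t" "\<forall>u\<in>U. t < u" by blast
    define y' where "y' = y(w := t)"
    have "good P I y'"
      unfolding good_def
    proof (intro ballI)
      fix u v assume u: "u \<in> I" and v: "v \<in> I"
      show "(arc P u v \<longrightarrow> y' u < y' v) \<and>
       (arc P u v \<and> Short P u v \<longrightarrow> y' v < y' u + 1) \<and>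
       (arc P u v \<and> ekind P u v = DownE \<longrightarrow> y' u + 1 < y' v)"
      proof (cases "u = w")
        case True
        show ?thesis
        proof (cases "v = w")
          case True with \<open>u = w\<close> show ?thesis using arc_irrefl[of P w] by simp
        next
          case False
          then have "arc P v w" using wmax v by blast
          then have "\<not> arc P u v" using True arc_asym by blast
          then show ?thesis by simp
        qed
      next
        case uw: False
        then have u': "u \<in> I'" using u unfolding I'_def by blast
        show ?thesis
        proof (cases "v = w")
          case True
          have "y u \<in> L" unfolding L_def using u' by blast
          moreover have "Short P u v \<Longrightarrow> y u + 1 \<in> U" unfolding U_def A_def using u' True by blast
          moreover have "ekind P u v = DownE \<Longrightarrow> y u + 1 \<in> L" unfolding L_def D_def using u' True by blast
          ultimately show ?thesis using t True uw unfolding y'_def by auto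
        next
          case False
          then have v': "v \<in> I'" using v unfolding I'_def by blast
          then show ?thesis using goodA[OF y u' v'] goodS[OF y u' v'] goodL[OF y u' v'] uw False unfolding y'_def by simp
        qed
      qed
    qed
    then show ?thesis by blast
  qed
qed

lemma realize_cell:
  fixes P :: "'n::{finite,linorder} \<Rightarrow> 'n \<Rightarrow> edge_kind"
  assumes pg: "parking_graph P"
  shows "\<exists>x. x \<in> cell P"
proof -
  obtain y where y: "good P UNIV y" using realize[OF pg] by blast
  have "(\<chi> i. y i) \<in> cell P"
    unfolding cell_def
  proof (intro CollectI allI impI)
    fix j k :: 'n assume jk: "j < k"
    have e: "ekind P k j = P j k" unfolding ekind_def using jk by auto
    show "(P j k = DownE \<longrightarrow> (\<chi> i. y i) $ j - (\<chi> i. y i) $ k > 1) \<and>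
      (P j k = DownishE \<longrightarrow> 0 < (\<chi> i. y i) $ j - (\<chi> i. y i) $ k \<and> (\<chi> i. y i) $ j - (\<chi> i. y i) $ k < 1) \<and>
      (P j k = UpE \<longrightarrow> (\<chi> i. y i) $ j - (\<chi> i. y i) $ k < 0)"
    proof (cases "P j k")
      case DownE
      then have "arc P k j" unfolding arc_def using jk by simp
      then have "y k + 1 < y j" using goodL[OF y _ _ _] DownE e by simp
      then show ?thesis using DownE by simp
    next
      case DownishE
      then have a: "arc P k j" unfolding arc_def using jk by simp
      then have "Short P k j" unfolding Short_def using DownishE e by (intro exI[of _ k] exI[of _ j]) simp
      then have "y j < y k + 1" "y k < y j" using goodS[OF y _ _ a] goodA[OF y _ _ a] by simp_all
      then show ?thesis using DownishE by simp
    next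
      case UpE
      then have "arc P j k" unfolding arc_def using jk by simp
      then have "y j < y k" using goodA[OF y] by simp
      then show ?thesis using UpE by simp
    qed
  qed
  then show ?thesis by blast
qed



lemma pat_ekind:
  fixes x :: "real^'n::{finite,linorder}"
  assumes x: "x \<notin> shi_union" and uv: "u \<noteq> v"
  shows "ekind (pat x) u v = DownishE \<Longrightarrow> \<bar>x $ u - x $ v\<bar> < 1"
    and "ekind (pat x) u v = DownE \<Longrightarrow> \<bar>x $ u - x $ v\<bar> > 1"
proof -
  have n1: "if u < v then x $ u - x $ v \<noteq> 1 else x $ v - x $ u \<noteq> 1"
    using x uv unfolding shi_union_iff by (cases u v rule: linorder_cases) auto
  show "ekind (pat x) u v = DownishE \<Longrightarrow> \<bar>x $ u - x $ v\<bar> < 1"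
    using uv n1 unfolding ekind_def pat_def
    by (cases u v rule: linorder_cases) (auto split: if_splits)
  show "ekind (pat x) u v = DownE \<Longrightarrow> \<bar>x $ u - x $ v\<bar> > 1"
    using uv n1 unfolding ekind_def pat_def
    by (cases u v rule: linorder_cases) (auto split: if_splits)
qed

lemma pat_ss:
  fixes x :: "real^'n::{finite,linorder}"
  assumes x: "x \<notin> shi_union"
  shows "source_sink_condition (pat x)"
  unfolding source_sink_condition_def
proof (intro conjI allI impI ballI)
  let ?R = "{(u, v). arc (pat x) u v}"
  let ?S = "{(u, v). x $ u < x $ v}"
  have RS: "?R \<subseteq> ?S" using arc_pat[OF x] by auto
  have "trans ?S" unfolding trans_def by auto
  then have "?S\<^sup>+ = ?S" by (rule trancl_id)
  then have "?R\<^sup>+ \<subseteq> ?S" using trancl_mono RS by (metis subrelI)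
  then show "acyclic ?R" unfolding acyclic_def by auto
next
  fix a b c s t
  assume prem: "a \<noteq> b \<and> b \<noteq> c \<and> a \<noteq> c \<and>
        (\<exists>u\<in>{a,b,c}. \<exists>v\<in>{a,b,c}. u \<noteq> v \<and> ekind (pat x) u v = DownE) \<and>
        (\<exists>u\<in>{a,b,c}. \<exists>v\<in>{a,b,c}. u \<noteq> v \<and> ekind (pat x) u v = DownishE)"
    and s: "s \<in> {a,b,c}" and t: "t \<in> {a,b,c}"
    and st: "s \<noteq> t \<and> (\<forall>u\<in>{a,b,c}. \<not> arc (pat x) u s) \<and> (\<forall>u\<in>{a,b,c}. \<not> arc (pat x) t u)"
  show "ekind (pat x) s t \<noteq> DownishE"
  proof
    assume d: "ekind (pat x) s t = DownishE"
    have lo: "x $ s \<le> x $ w" if "w \<in> {a,b,c}" for w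
      using st that arc_pat[OF x, of w s] by (cases "w = s") auto
    have hi: "x $ w \<le> x $ t" if "w \<in> {a,b,c}" for w
      using st that arc_pat[OF x, of t w] by (cases "w = t") auto
    have "\<bar>x $ s - x $ t\<bar> < 1" using pat_ekind(1)[OF x _ d] st by blast
    obtain u v where uv: "u \<in> {a,b,c}" "v \<in> {a,b,c}" "u \<noteq> v" "ekind (pat x) u v = DownE"
      using prem by blast
    have "\<bar>x $ u - x $ v\<bar> > 1" using pat_ekind(2)[OF x uv(3,4)] .
    moreover have "x $ s \<le> x $ u" "x $ s \<le> x $ v" "x $ u \<le> x $ t" "x $ v \<le> x $ t"
      using lo hi uv by auto
    ultimately show False using \<open>\<bar>x $ s - x $ t\<bar> < 1\<close> by linarith
  qed
qed

theorem theorem2p1: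
  shows "(\<forall>P :: 'n::{finite,linorder} \<Rightarrow> 'n \<Rightarrow> edge_kind. parking_graph P \<longrightarrow>
            interior (psi P) \<noteq> {} \<and> interior (psi P) \<in> shi_regions) \<and>
         bij_betw (\<lambda>P. interior (psi P)) {P :: 'n \<Rightarrow> 'n \<Rightarrow> edge_kind. parking_graph P} shi_regions"
proof -
  have part1: "interior (psi P) \<noteq> {} \<and> interior (psi P) \<in> shi_regions"
    if pg: "parking_graph P" for P :: "'n \<Rightarrow> 'n \<Rightarrow> edge_kind"
  proof -
    obtain x where x: "x \<in> cell P" using realize_cell[OF pg] by blast
    have xn: "x \<notin> shi_union" using cell_not_shi[OF x] .
    have "P = pat x" using cell_pat[OF _ x] pg unfolding parking_graph_def by blast
    then have "interior (psi P) = connected_component_set (- shi_union) x"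
      using comp_cell[OF xn] interior_psi by simp
    then show ?thesis using x xn interior_psi unfolding shi_regions_def by auto
  qed
  have inj: "inj_on (\<lambda>P. interior (psi P)) {P :: 'n \<Rightarrow> 'n \<Rightarrow> edge_kind. parking_graph P}"
  proof (rule inj_onI)
    fix P Q :: "'n \<Rightarrow> 'n \<Rightarrow> edge_kind"
    assume P: "P \<in> {P. parking_graph P}" and Q: "Q \<in> {P. parking_graph P}"
      and e: "interior (psi P) = interior (psi Q)"
    obtain x where x: "x \<in> cell P" using realize_cell P by blast
    have xq: "x \<in> cell Q" using x e interior_psi by metis
    have "P = pat x" using cell_pat[OF _ x] P unfolding parking_graph_def by blast
    moreover have "Q = pat x" using cell_pat[OF _ xq] Q unfolding parking_graph_def by blast
    ultimately show "P = Q" by simp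
  qed
  have surj: "shi_regions \<subseteq> (\<lambda>P. interior (psi P)) ` {P :: 'n \<Rightarrow> 'n \<Rightarrow> edge_kind. parking_graph P}"
  proof
    fix C :: "(real ^ 'n::{finite,linorder}) set" assume "C \<in> shi_regions"
    then obtain x where x: "x \<notin> shi_union" and C: "C = connected_component_set (- shi_union) x"
      unfolding shi_regions_def by blast
    have "parking_graph (pat x)" unfolding parking_graph_def using pat_normalised pat_ss[OF x] by blast
    moreover have "C = interior (psi (pat x))" using C comp_cell[OF x] by (simp add: interior_psi)
    ultimately show "C \<in> (\<lambda>P. interior (psi P)) ` {P. parking_graph P}" by blast
  qed
  show ?thesis
    unfolding bij_betw_def using part1 inj surj by blast
qed


end
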